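(* Let $p=p_1p_2\cdots p_n$ be a permutation avoiding the pattern $1324$, and let $w(p)$ and $z(p)$ be the two words of length $n$ over $\{A,B,C,D\}$ defined in the context. Then for every $i\geq 1$: if the $i$th letter $A$ from the right in $w(p)$ is in the middle of a $CAB$-factor (i.e., it is immediately preceded by a letter $C$ and immediately followed by a letter $B$), then the $i$th segment of $z(p)$ from the left contains a letter $B$.
   Context: A permutation $p$ avoids $1324$ if there are no indices $i_1<i_2<i_3<i_4$ with $p_{i_1}<p_{i_3}<p_{i_2}<p_{i_4}$. An entry $p_i$ is a left-to-right minimum if it is smaller than all entries to its left, and a right-to-left maximum if it is larger than all entries to its right (these notions are also applied to subsequences). Coloring: scan $p$ from left to right; color $p_i$ blue if coloring it red would create a $132$-pattern consisting entirely of red entries (among the previously colored red entries together with $p_i$); otherwise color $p_i$ red. Then mark each entry with a letter: (1) a red entry that is a left-to-right minimum of the subsequence of red entries gets $A$; (2) a red entry that is not such a left-to-right minimum gets $B$; (3) a blue entry that is not a right-to-left maximum of the subsequence of blue entries gets $C$; (4) a blue entry that is a right-to-left maximum of the subsequence of blue entries gets $D$; (4') finally, every entry that is a right-to-left maximum of all of $p$ but not a left-to-right minimum of $p$ is colored blue and marked $D$, regardless of the earlier rules. The word $w(p)$ has as its $i$th letter the letter of $p_i$; the word $z(p)$ has as its $i$th letter the letter of the entry of value $i$. A segment of a word $v$ over $\{A,B,C,D\}$ is a factor (consecutive letters) that starts with a letter $A$ and ends immediately before the next letter $A$, or at the end of $v$. The $i$th segment from the left is the one starting at the $i$th letter $A$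 from the left. *)

theory Defs
  imports Main
begin

text \<open>Permutations of length n are lists containing each of 1..n exactly once.
  Positions are 0-based list indices; values are 1..n.\<close>

definition is_perm :: "nat list \<Rightarrow> bool" where
  "is_perm p \<longleftrightarrow> distinct p \<and> set p = {1..length p}"

definition avoids1324 :: "nat list \<Rightarrow> bool" where
  "avoids1324 p \<longleftrightarrow> \<not> (\<exists>i1 i2 i3 i4. i1 < i2 \<and> i2 < i3 \<and> i3 < i4 \<and> i4 < length p \<and>
      p ! i1 < p ! i3 \<and> p ! i3 < p ! i2 \<and> p ! i2 < p ! i4)"

definition has132 :: "nat list \<Rightarrow> bool" where
  "has132 ys \<longleftrightarrow> (\<exists>i j k. i < j \<and> j < k \<and> k < length ys \<and>
      ys ! i < ys ! k \<and> ys ! k < ys ! j)"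

text \<open>Coloring scan: R is the list of values already colored red (in order).
  True = red, False = blue.\<close>
fun color_scan :: "nat list \<Rightarrow> nat list \<Rightarrow> bool list" where
  "color_scan R [] = []"
| "color_scan R (x # xs) =
     (if has132 (R @ [x]) then False # color_scan R xs
      else True # color_scan (R @ [x]) xs)"

definition is_red :: "nat list \<Rightarrow> nat \<Rightarrow> bool" where
  "is_red p i = (color_scan [] p ! i)"

datatype letter = A | B | C | D

definition letter_at :: "nat list \<Rightarrow> nat \<Rightarrow> letter" where
  "letter_at p i =
     (if (\<forall>j. i < j \<and> j < length p \<longrightarrow> p ! j < p ! i)
          \<and> (\<exists>j<i. p ! j < p ! i) then D
      else if is_red p i then
        (if (\<forall>j<i. is_red p j \<longrightarrow> p ! i < p ! j) then A else B)
      else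
        (if (\<forall>j. i < j \<and> j < length p \<and> \<not> is_red p j \<longrightarrow> p ! j < p ! i) then D else C))"

definition wword :: "nat list \<Rightarrow> letter list" where
  "wword p = map (letter_at p) [0..<length p]"

definition zword :: "nat list \<Rightarrow> letter list" where
  "zword p = map (\<lambda>v. letter_at p (THE j. j < length p \<and> p ! j = v)) [1..<length p + 1]"

definition A_positions :: "letter list \<Rightarrow> nat list" where
  "A_positions v = filter (\<lambda>j. v ! j = A) [0..<length v]"

definition ith_A_from_right_in_CAB :: "letter list \<Rightarrow> nat \<Rightarrow> bool" where
  "ith_A_from_right_in_CAB v i \<longleftrightarrow>
     1 \<le> i \<and> i \<le> length (A_positions v) \<and>
     (let j = rev (A_positions v) ! (i - 1) in
        0 < j \<and> j + 1 < length v \<and> v ! (j - 1) = C \<and> v ! (j + 1) = B)"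

definition ith_segment_contains_B :: "letter list \<Rightarrow> nat \<Rightarrow> bool" where
  "ith_segment_contains_B v i \<longleftrightarrow>
     1 \<le> i \<and> i \<le> length (A_positions v) \<and>
     (let s = A_positions v ! (i - 1);
          e = (if i < length (A_positions v) then A_positions v ! i else length v)
      in \<exists>k. s \<le> k \<and> k < e \<and> v ! k = B)"

end

theory Submission
  imports Defs
begin

fun redfin :: "nat list \<Rightarrow> nat list \<Rightarrow> nat list" where
  "redfin R [] = R"
| "redfin R (x # xs) = (if has132 (R @ [x]) then redfin R xs else redfin (R @ [x]) xs)"

lemma cs_length: "length (color_scan R xs) = length xs"
  by (induction xs arbitrary: R) auto

lemma cs_append: "color_scan R (xs @ ys) = color_scan R xs @ color_scan (redfin R xs) ys"
  by (induction xs arbitrary: R) auto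

lemma redfin_append: "redfin R (xs @ ys) = redfin (redfin R xs) ys"
  by (induction xs arbitrary: R) auto

lemma cs_nth:
  assumes "i < length p"
  shows "is_red p i = (\<not> has132 (redfin [] (take i p) @ [p!i]))"
proof -
  have "color_scan [] p = color_scan [] (take i p) @ color_scan (redfin [] (take i p)) (drop i p)"
    using cs_append[of "[]" "take i p" "drop i p"] by simp
  moreover have "drop i p = p!i # drop (Suc i) p" using assms by (simp add: Cons_nth_drop_Suc)
  ultimately show ?thesis
    unfolding is_red_def using assms by (simp add: nth_append cs_length)
qed

lemma has132_Nil: "\<not> has132 []"
  by (simp add: has132_def)

lemma fin_take:
  "i \<le> length p \<Longrightarrow> redfin [] (take i p) = map (nth p) (filter (is_red p) [0..<i])
     \<and> \<not> has132 (redfin [] (take i p))"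
proof (induction i)
  case 0
  then show ?case by (simp add: has132_Nil)
next
  case (Suc i)
  then have IH: "redfin [] (take i p) = map (nth p) (filter (is_red p) [0..<i])"
     "\<not> has132 (redfin [] (take i p))" and il: "i < length p" by auto
  have t: "take (Suc i) p = take i p @ [p!i]" using il by (simp add: take_Suc_conv_app_nth)
  have r: "is_red p i = (\<not> has132 (redfin [] (take i p) @ [p!i]))" using cs_nth il by blast
  show ?case
  proof (cases "has132 (redfin [] (take i p) @ [p!i])")
    case True
    then show ?thesis using IH r by (simp add: t redfin_append)
  next
    case False
    then show ?thesis using IH r by (simp add: t redfin_append)
  qed
qed

lemma has132_snoc:
  fixes ks :: "nat list"
  assumes "sorted_wrt (<) ks"
  shows "has132 (map f ks @ [x]) \<longleftrightarrow> has132 (map f ks) \<or>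
     (\<exists>a\<in>set ks. \<exists>b\<in>set ks. a < b \<and> f a < x \<and> x < f b)"
proof
  assume "has132 (map f ks @ [x])"
  then obtain i j k where h: "i < j" "j < k" "k < length ks + 1"
    "(map f ks @ [x]) ! i < (map f ks @ [x]) ! k" "(map f ks @ [x]) ! k < (map f ks @ [x]) ! j"
    unfolding has132_def by auto
  show "has132 (map f ks) \<or> (\<exists>a\<in>set ks. \<exists>b\<in>set ks. a < b \<and> f a < x \<and> x < f b)"
  proof (cases "k < length ks")
    case True
    then have "has132 (map f ks)" using h unfolding has132_def
      by (rule_tac x=i in exI, rule_tac x=j in exI, rule_tac x=k in exI) (auto simp: nth_append)
    then show ?thesis by blast
  next
    case False
    then have k: "k = length ks" using h by auto
    have "ks!i < ks!j" using assms h k by (simp add: sorted_wrt_nth_less)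
    moreover have "ks!i \<in> set ks" "ks!j \<in> set ks" using h k by auto
    ultimately have "\<exists>a\<in>set ks. \<exists>b\<in>set ks. a < b \<and> f a < x \<and> x < f b"
    proof (intro bexI conjI)
      show "ks!i < ks!j" by fact
      show "f (ks!i) < x" using h k by (simp add: nth_append)
      show "x < f (ks!j)" using h k by (simp add: nth_append)
    qed (use h k in simp_all)
    then show ?thesis by blast
  qed
next
  assume "has132 (map f ks) \<or> (\<exists>a\<in>set ks. \<exists>b\<in>set ks. a < b \<and> f a < x \<and> x < f b)"
  then show "has132 (map f ks @ [x])"
  proof
    assume "has132 (map f ks)"
    then obtain i j k where h: "i < j" "j < k" "k < length ks"
      "map f ks ! i < map f ks ! k" "map f ks ! k < map f ks ! j" unfolding has132_def by auto
    show ?thesis unfolding has132_def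
    proof (intro exI conjI)
      show "i < j" "j < k" by fact+
      show "k < length (map f ks @ [x])" using h by simp
      show "(map f ks @ [x]) ! i < (map f ks @ [x]) ! k" using h by (simp add: nth_append)
      show "(map f ks @ [x]) ! k < (map f ks @ [x]) ! j" using h by (simp add: nth_append)
    qed
  next
    assume "\<exists>a\<in>set ks. \<exists>b\<in>set ks. a < b \<and> f a < x \<and> x < f b"
    then obtain a b where ab: "a \<in> set ks" "b \<in> set ks" "a < b" "f a < x" "x < f b" by blast
    obtain i where i: "i < length ks" "ks!i = a" using ab in_set_conv_nth by metis
    obtain j where j: "j < length ks" "ks!j = b" using ab in_set_conv_nth by metis
    have "i < j"
    proof (rule ccontr)
      assume "\<not> i < j"
      then have "j < i \<or> j = i" by auto
      then show False
      proof
        assume "j < i"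
        then have "ks!j < ks!i" using sorted_wrt_nth_less[OF assms, of j i] i by simp
        then have "b < a" using i j by simp
        then show False using ab(3) by linarith
      next
        assume "j = i" then show False using i j ab by simp
      qed
    qed
    then show ?thesis unfolding has132_def using i j ab
      by (rule_tac x=i in exI, rule_tac x=j in exI, rule_tac x="length ks" in exI) (auto simp: nth_append)
  qed
qed

lemma red_char:
  assumes "c < length p"
  shows "is_red p c \<longleftrightarrow> \<not> (\<exists>a b. a < b \<and> b < c \<and> is_red p a \<and> is_red p b \<and> p!a < p!c \<and> p!c < p!b)"
proof -
  let ?ks = "filter (is_red p) [0..<c]"
  have ft: "redfin [] (take c p) = map (nth p) ?ks" "\<not> has132 (redfin [] (take c p))"
    using fin_take[of c p] assms by auto
  have s: "sorted_wrt (<) ?ks" by (simp add: sorted_wrt_filter)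
  have "is_red p c = (\<not> has132 (map (nth p) ?ks @ [p!c]))" using cs_nth assms ft by simp
  also have "\<dots> = (\<not> (\<exists>a\<in>set ?ks. \<exists>b\<in>set ?ks. a < b \<and> p!a < p!c \<and> p!c < p!b))"
    using has132_snoc[OF s, of "nth p" "p!c"] ft by simp
  also have "\<dots> = (\<not> (\<exists>a b. a < b \<and> b < c \<and> is_red p a \<and> is_red p b \<and> p!a < p!c \<and> p!c < p!b))"
    by auto
  finally show ?thesis .
qed


lemma letA: "letter_at p x = A \<Longrightarrow> is_red p x \<and> (\<forall>y<x. is_red p y \<longrightarrow> p!x < p!y)"
  unfolding letter_at_def by (auto split: if_splits)

lemma letB: "letter_at p x = B \<Longrightarrow> is_red p x \<and> \<not> (\<forall>y<x. is_red p y \<longrightarrow> p!x < p!y)"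
  unfolding letter_at_def by (auto split: if_splits)

lemma letC: "letter_at p x = C \<Longrightarrow> \<not> is_red p x \<and>
   (\<exists>m. x < m \<and> m < length p \<and> \<not> is_red p m \<and> \<not> p!m < p!x)"
  unfolding letter_at_def by (auto split: if_splits)

lemma core:
  assumes perm: "is_perm p" and av: "avoids1324 p"
    and j: "0 < j" "j + 1 < length p"
    and lA: "letter_at p j = A" and lC: "letter_at p (j - 1) = C" and lB: "letter_at p (j + 1) = B"
  shows "p!j < p!(j+1) \<and> (\<forall>k. k < j \<and> letter_at p k = A \<longrightarrow> p!(j+1) < p!k)"
proof -
  let ?n = "length p"
  have dist: "distinct p" using perm by (simp add: is_perm_def)
  have neq: "\<And>x y. x < ?n \<Longrightarrow> y < ?n \<Longrightarrow> x \<noteq> y \<Longrightarrow> p!x \<noteq> p!y"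
    using dist by (simp add: nth_eq_iff_index_eq)
  have no1324: "\<And>i1 i2 i3 i4. i1 < i2 \<Longrightarrow> i2 < i3 \<Longrightarrow> i3 < i4 \<Longrightarrow> i4 < ?n \<Longrightarrow>
      p ! i1 < p ! i3 \<Longrightarrow> p ! i3 < p ! i2 \<Longrightarrow> p ! i2 < p ! i4 \<Longrightarrow> False"
    using av unfolding avoids1324_def by blast
  have Aj: "is_red p j" "\<forall>y<j. is_red p y \<longrightarrow> p!j < p!y" using letA[OF lA] by auto
  have Bj: "is_red p (j+1)" "\<not> (\<forall>y<j+1. is_red p y \<longrightarrow> p!(j+1) < p!y)" using letB[OF lB] by auto
  have Cj: "\<not> is_red p (j-1)" using letC[OF lC] by auto
  obtain m where m: "j - 1 < m" "m < ?n" "\<not> is_red p m" "\<not> p!m < p!(j-1)" using letC[OF lC] by auto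
  have "m \<noteq> j" "m \<noteq> j+1" using m Aj Bj by auto
  then have mj: "j + 1 < m" using m by auto
  have pm: "p!(j-1) < p!m" using m neq[of m "j-1"] j by (cases "m = j - 1") auto
  obtain a b where ab: "a < b" "b < j - 1" "is_red p a" "is_red p b" "p!a < p!(j-1)" "p!(j-1) < p!b"
  proof -
    have "j - 1 < length p" using j by auto
    then show ?thesis using Cj red_char[of "j-1" p] that by blast
  qed
  have pb: "p!(j+1) < p!b"
  proof (rule ccontr)
    assume "\<not> p!(j+1) < p!b"
    moreover have "p!(j+1) \<noteq> p!b" using neq[of "j+1" b] ab j by auto
    ultimately have "p!b < p!(j+1)" by auto
    moreover have "j - 1 < j + 1" by simp
    ultimately show False using no1324[of a b "j-1" "j+1"] ab j by blast
  qed
  have pa: "p!(j+1) < p!a"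
  proof (rule ccontr)
    assume "\<not> p!(j+1) < p!a"
    moreover have "p!(j+1) \<noteq> p!a" using neq[of "j+1" a] ab j by auto
    ultimately have "p!a < p!(j+1)" by auto
    then show False using red_char[of "j+1" p] Bj(1) ab pb j by auto
  qed
  have part1: "p!j < p!(j+1)"
  proof -
    obtain y where y: "y < j+1" "is_red p y" "\<not> p!(j+1) < p!y" using Bj(2) by auto
    have "p!y \<noteq> p!(j+1)" using neq[of y "j+1"] y j by auto
    then have "p!y < p!(j+1)" using y by auto
    moreover have "y = j \<or> y < j" using y by auto
    ultimately show ?thesis using Aj(2) y by auto
  qed
  have part2: "\<forall>k. k < j \<and> letter_at p k = A \<longrightarrow> p!(j+1) < p!k"
  proof (intro allI impI)
    fix k assume k: "k < j \<and> letter_at p k = A"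
    have "k \<noteq> j - 1" using k lC by auto
    then have kj: "k < j - 1" using k by auto
    show "p!(j+1) < p!k"
    proof (rule ccontr)
      assume "\<not> p!(j+1) < p!k"
      moreover have "p!(j+1) \<noteq> p!k" using neq[of "j+1" k] k j by auto
      ultimately have "p!k < p!(j+1)" by auto
      moreover have "j - 1 < j + 1" "p!(j+1) < p!(j-1)" using pa ab by auto
      ultimately show False using no1324[of k "j-1" "j+1" m] kj mj m pm by blast
    qed
  qed
  show ?thesis using part1 part2 by blast
qed


lemma perm_facts:
  assumes "is_perm p" "k < length p"
  shows "1 \<le> p!k" "p!k \<le> length p" "(THE j. j < length p \<and> p ! j = p!k) = k"
proof -
  have "p!k \<in> set p" using assms by simp
  then show "1 \<le> p!k" "p!k \<le> length p" using assms(1) by (auto simp: is_perm_def)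
  show "(THE j. j < length p \<and> p ! j = p!k) = k"
  proof (rule the_equality)
    show "k < length p \<and> p ! k = p ! k" using assms by simp
    fix j assume "j < length p \<and> p ! j = p ! k"
    then show "j = k" using assms nth_eq_iff_index_eq[of p j k] by (auto simp: is_perm_def)
  qed
qed

lemma wword_len: "length (wword p) = length p" by (simp add: wword_def)
lemma wword_nth: "k < length p \<Longrightarrow> wword p ! k = letter_at p k" by (simp add: wword_def)
lemma zword_len: "length (zword p) = length p" by (simp add: zword_def del: upt_Suc)

lemma zword_nth:
  assumes "is_perm p" "k < length p"
  shows "zword p ! (p!k - 1) = letter_at p k"
proof -
  have h: "1 \<le> p!k" "p!k \<le> length p" using perm_facts assms by auto
  have u: "[1..<length p + 1] ! (p!k - 1) = p!k" using h by (simp del: upt_Suc)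
  have "zword p ! (p!k - 1) = letter_at p (THE j. j < length p \<and> p ! j = [1..<length p + 1] ! (p!k - 1))"
    unfolding zword_def
  proof (rule nth_map)
    show "p ! k - 1 < length [1..<length p + 1]" using h by auto
  qed
  then show ?thesis unfolding u using perm_facts(3)[OF assms] by simp
qed

lemma Apos_w: "A_positions (wword p) = filter (\<lambda>k. letter_at p k = A) [0..<length p]"
  unfolding A_positions_def wword_len by (rule filter_cong) (auto simp: wword_nth)

lemma A_decr:
  assumes "k < k'" "letter_at p k = A" "letter_at p k' = A"
  shows "p!k' < p!k"
  using letA[OF assms(2)] letA[OF assms(3)] assms(1) by auto

lemma Apos_z:
  assumes perm: "is_perm p"
  shows "A_positions (zword p) = map (\<lambda>k. p!k - 1) (rev (A_positions (wword p)))"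
proof -
  let ?n = "length p"
  let ?P = "A_positions (wword p)"
  let ?f = "\<lambda>k. p!k - 1"
  have setP: "set ?P = {k. k < ?n \<and> letter_at p k = A}" by (auto simp: Apos_w)
  have sP: "sorted_wrt (<) ?P" by (simp add: Apos_w sorted_wrt_filter)
  have s1: "sorted_wrt (<) (A_positions (zword p))"
    by (simp add: A_positions_def sorted_wrt_filter)
  have s2: "sorted_wrt (<) (map ?f (rev ?P))"
    unfolding sorted_wrt_map sorted_wrt_rev
  proof (rule sorted_wrt_mono_rel[OF _ sP])
    fix x y assume xy: "x \<in> set ?P" "y \<in> set ?P" "x < y"
    then have "p!y < p!x" using A_decr setP by auto
    moreover have "1 \<le> p!y" using perm_facts[OF perm] xy setP by auto
    ultimately show "p!y - 1 < p!x - 1" by auto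
  qed
  have "set (A_positions (zword p)) = set (map ?f (rev ?P))"
  proof
    show "set (A_positions (zword p)) \<subseteq> set (map ?f (rev ?P))"
    proof
      fix t assume "t \<in> set (A_positions (zword p))"
      then have t: "t < ?n" "zword p ! t = A" by (auto simp: A_positions_def zword_len)
      have "t + 1 \<in> set p" using perm t by (auto simp: is_perm_def)
      then obtain k where k: "k < ?n" "p!k = t + 1" by (auto simp: in_set_conv_nth)
      have "letter_at p k = A" using zword_nth[OF perm k(1)] k t by simp
      then show "t \<in> set (map ?f (rev ?P))" using setP k by force
    qed
  next
    show "set (map ?f (rev ?P)) \<subseteq> set (A_positions (zword p))"
    proof
      fix t assume "t \<in> set (map ?f (rev ?P))"
      then obtain k where k: "k < ?n" "letter_at p k = A" "t = p!k - 1" using setP by auto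
      have "t < ?n" using perm_facts[OF perm k(1)] k by auto
      moreover have "zword p ! t = A" using zword_nth[OF perm k(1)] k by simp
      ultimately show "t \<in> set (A_positions (zword p))" by (simp add: A_positions_def zword_len)
    qed
  qed
  then show ?thesis using strict_sorted_equal[OF s2 s1] by simp
qed

theorem lemma3p1:
  fixes p :: "nat list" and i :: nat
  assumes "is_perm p"
    and "avoids1324 p"
    and "i \<ge> 1"
    and "ith_A_from_right_in_CAB (wword p) i"
  shows "ith_segment_contains_B (zword p) i"
proof -
  let ?n = "length p"
  let ?P = "A_positions (wword p)"
  let ?Z = "A_positions (zword p)"
  define j where "j = rev ?P ! (i - 1)"
  have iP: "1 \<le> i" "i \<le> length ?P" and j: "0 < j" "j + 1 < ?n"
    and wC: "wword p ! (j - 1) = C" and wB: "wword p ! (j + 1) = B"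
    using assms(4) unfolding ith_A_from_right_in_CAB_def j_def Let_def by (auto simp: wword_len)
  have setP: "set ?P = {k. k < ?n \<and> letter_at p k = A}" by (auto simp: Apos_w)
  have jin: "j \<in> set ?P" using iP unfolding j_def by (simp add: rev_nth)
  then have lA: "letter_at p j = A" using setP by auto
  have lC: "letter_at p (j - 1) = C" using wC j by (simp add: wword_nth)
  have lB: "letter_at p (j + 1) = B" using wB j by (simp add: wword_nth)
  have co: "p!j < p!(j+1) \<and> (\<forall>k. k < j \<and> letter_at p k = A \<longrightarrow> p!(j+1) < p!k)"
    using core[OF assms(1,2) j lA lC lB] .
  have Zeq: "?Z = map (\<lambda>k. p!k - 1) (rev ?P)" using Apos_z[OF assms(1)] .
  have lenZ: "length ?Z = length ?P" using Zeq by simp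
  have Zi: "?Z ! (i - 1) = p!j - 1" using Zeq iP unfolding j_def by simp
  define t where "t = p!(j+1) - 1"
  have pj1: "1 \<le> p!(j+1)" "p!(j+1) \<le> ?n" using perm_facts[OF assms(1), of "j+1"] j by auto
  have zt: "zword p ! t = B" using zword_nth[OF assms(1), of "j+1"] j lB unfolding t_def by simp
  have st: "?Z ! (i - 1) \<le> t" using Zi co unfolding t_def by auto
  have te: "t < (if i < length ?Z then ?Z ! i else length (zword p))"
  proof (cases "i < length ?Z")
    case True
    define k where "k = rev ?P ! i"
    have kin: "k \<in> set ?P" using True lenZ unfolding k_def by (simp add: rev_nth)
    have sP: "sorted_wrt (<) ?P" by (simp add: Apos_w sorted_wrt_filter)
    then have "sorted_wrt (\<lambda>x y. y < x) (rev ?P)" by (simp add: sorted_wrt_rev)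
    then have "k < j" unfolding k_def j_def using True lenZ iP
      sorted_wrt_nth_less[of "\<lambda>x y. y < x" "rev ?P" "i - 1" i] by simp
    then have "p!(j+1) < p!k" using co kin setP by auto
    moreover have "?Z ! i = p!k - 1" using Zeq True lenZ unfolding k_def by simp
    ultimately show ?thesis using True pj1 unfolding t_def by auto
  next
    case False
    then show ?thesis using pj1 unfolding t_def by (auto simp: zword_len)
  qed
  show ?thesis unfolding ith_segment_contains_B_def Let_def
    using iP lenZ st te zt by auto
qed

end
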